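(* Let $0<p\le1$, $\ell^p=\{\{x_n\}\subset\mathbb R:\sum_{n=1}^\infty|x_n|^p<\infty\}$, and $D(x,y)=\big(\sum_{n=1}^\infty|x_n-y_n|^p\big)^{1/p}$, which is a $b$-metric with coefficient $K=2^{1/p}$. Let $q=\frac{p}{p+1}$, so that $(2K)^q=2$. Then the function $$d(x,y)=\inf\Big\{\sum_{i=1}^n D^{q}(x_i,x_{i+1}): x_1=x,x_2,\dots,x_{n+1}=y\in \ell^p,\ n\in\mathbb N\Big\}$$ equals $\big(\sum_{n=1}^\infty|x_n-y_n|^p\big)^{\frac{1}{p+1}}$ for all $x,y\in\ell^p$, and this is a metric on $\ell^p$. *)

theory Defs
  imports "HOL-Analysis.Analysis"
begin

text \<open>The sequence space l^p (sequences indexed from 0 instead of 1).\<close>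
definition lp :: "real \<Rightarrow> (nat \<Rightarrow> real) set" where
  "lp p = {x. summable (\<lambda>n. \<bar>x n\<bar> powr p)}"

definition Dp :: "real \<Rightarrow> (nat \<Rightarrow> real) \<Rightarrow> (nat \<Rightarrow> real) \<Rightarrow> real" where
  "Dp p x y = (\<Sum>n. \<bar>x n - y n\<bar> powr p) powr (1 / p)"

definition chain_d :: "real \<Rightarrow> (nat \<Rightarrow> real) \<Rightarrow> (nat \<Rightarrow> real) \<Rightarrow> real" where
  "chain_d p x y = Inf {(\<Sum>i<n. (Dp p (c i) (c (Suc i))) powr (p / (p + 1))) | n c.
      n \<ge> 1 \<and> c 0 = x \<and> c n = y \<and> (\<forall>i\<le>n. c i \<in> lp p)}"

definition metric_on :: "'a set \<Rightarrow> ('a \<Rightarrow> 'a \<Rightarrow> real) \<Rightarrow> bool" where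
  "metric_on S d \<longleftrightarrow>
     (\<forall>x\<in>S. \<forall>y\<in>S. 0 \<le> d x y) \<and>
     (\<forall>x\<in>S. \<forall>y\<in>S. d x y = 0 \<longleftrightarrow> x = y) \<and>
     (\<forall>x\<in>S. \<forall>y\<in>S. d x y = d y x) \<and>
     (\<forall>x\<in>S. \<forall>y\<in>S. \<forall>z\<in>S. d x z \<le> d x y + d y z)"

end

theory Submission
  imports Defs
begin

lemma powr_subadd:
  fixes a b r :: real
  assumes "0 \<le> a" "0 \<le> b" "0 < r" "r \<le> 1"
  shows "(a + b) powr r \<le> a powr r + b powr r"
proof (cases "a = 0 \<or> b = 0")
  case True then show ?thesis using assms by auto
next
  case False
  hence a: "a > 0" and b: "b > 0" using assms by auto
  let ?s = "a + b"
  have s: "?s > 0" using a b by simp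
  have t1: "a / ?s \<le> (a / ?s) powr r"
    using powr_mono'[of r 1 "a / ?s"] assms a b by simp
  have t2: "b / ?s \<le> (b / ?s) powr r"
    using powr_mono'[of r 1 "b / ?s"] assms a b by simp
  have "1 = a / ?s + b / ?s" using s by (simp add: add_divide_distrib[symmetric])
  also have "\<dots> \<le> (a powr r + b powr r) / ?s powr r"
    using t1 t2 by (simp add: powr_divide add_divide_distrib)
  finally have "?s powr r \<le> a powr r + b powr r"
    using s by (simp add: field_simps)
  thus ?thesis .
qed

lemma powr_sum_subadd:
  fixes r :: real
  assumes "0 < r" "r \<le> 1" "\<And>i. i \<in> A \<Longrightarrow> 0 \<le> f i"
  shows "(sum f A) powr r \<le> (\<Sum>i\<in>A. f i powr r)"
  using assms(3)
proof (induction A rule: infinite_finite_induct)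
  case (insert x F)
  have "sum f (insert x F) powr r = (f x + sum f F) powr r" using insert by simp
  also have "\<dots> \<le> f x powr r + sum f F powr r"
    using powr_subadd assms insert.prems by (simp add: sum_nonneg)
  also have "\<dots> \<le> f x powr r + (\<Sum>i\<in>F. f i powr r)" using insert by simp
  finally show ?case using insert by simp
qed auto

lemma abs_tri_powr:
  fixes p a b c :: real
  assumes "0 < p" "p \<le> 1"
  shows "\<bar>a - c\<bar> powr p \<le> \<bar>a - b\<bar> powr p + \<bar>b - c\<bar> powr p"
proof -
  have "\<bar>a - c\<bar> powr p \<le> (\<bar>a - b\<bar> + \<bar>b - c\<bar>) powr p"
    using assms by (intro powr_mono2) auto
  also have "\<dots> \<le> \<bar>a - b\<bar> powr p + \<bar>b - c\<bar> powr p"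
    using assms by (intro powr_subadd) auto
  finally show ?thesis .
qed

definition SS :: "real \<Rightarrow> (nat \<Rightarrow> real) \<Rightarrow> (nat \<Rightarrow> real) \<Rightarrow> real" where
  "SS p x y = (\<Sum>n. \<bar>x n - y n\<bar> powr p)"

lemma summ_diff:
  assumes "0 < p" "p \<le> 1" "x \<in> lp p" "y \<in> lp p"
  shows "summable (\<lambda>n. \<bar>x n - y n\<bar> powr p)"
proof -
  have gs: "summable (\<lambda>n. \<bar>x n - 0\<bar> powr p + \<bar>0 - y n\<bar> powr p)"
    using assms by (auto simp: lp_def intro: summable_add)
  have h: "\<And>n. \<bar>x n - y n\<bar> powr p \<le> \<bar>x n - 0\<bar> powr p + \<bar>0 - y n\<bar> powr p"
  proof -
    fix n show "\<bar>x n - y n\<bar> powr p \<le> \<bar>x n - 0\<bar> powr p + \<bar>0 - y n\<bar> powr p"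
      using abs_tri_powr[OF assms(1,2), where a="x n" and b=0 and c="y n"] by simp
  qed
  show ?thesis
    by (rule summable_comparison_test'[where N=0, OF gs]) (use h in auto)
qed

lemma SS_nonneg: "0 < p \<Longrightarrow> p \<le> 1 \<Longrightarrow> x \<in> lp p \<Longrightarrow> y \<in> lp p \<Longrightarrow> 0 \<le> SS p x y"
  unfolding SS_def by (intro suminf_nonneg summ_diff) auto

lemma SS_tri:
  assumes "0 < p" "p \<le> 1" "x \<in> lp p" "y \<in> lp p" "z \<in> lp p"
  shows "SS p x z \<le> SS p x y + SS p y z"
proof -
  have s1: "summable (\<lambda>n. \<bar>x n - y n\<bar> powr p)" and s2: "summable (\<lambda>n. \<bar>y n - z n\<bar> powr p)"
    and s3: "summable (\<lambda>n. \<bar>x n - z n\<bar> powr p)" using summ_diff assms by auto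
  have "SS p x z \<le> (\<Sum>n. \<bar>x n - y n\<bar> powr p + \<bar>y n - z n\<bar> powr p)"
    unfolding SS_def
    by (rule suminf_le) (use abs_tri_powr[OF assms(1,2)] s1 s2 s3 in \<open>auto intro: summable_add\<close>)
  also have "\<dots> = SS p x y + SS p y z"
    unfolding SS_def using suminf_add[OF s1 s2] by simp
  finally show ?thesis .
qed

lemma SS_sym: "SS p x y = SS p y x"
  unfolding SS_def by (simp add: abs_minus_commute)

lemma SS_zero:
  assumes "0 < p" "p \<le> 1" "x \<in> lp p" "y \<in> lp p"
  shows "SS p x y = 0 \<longleftrightarrow> x = y"
proof
  assume h: "SS p x y = 0"
  have "(\<lambda>n. \<bar>x n - y n\<bar> powr p) = (\<lambda>n. 0)"
    using h summ_diff[OF assms] unfolding SS_def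
    by (subst (asm) suminf_eq_zero_iff) auto
  hence "\<And>n. x n = y n" by (metis abs_eq_0 eq_iff_diff_eq_0 powr_eq_0_iff)
  thus "x = y" by auto
qed (simp add: SS_def)

lemma Dq:
  assumes "0 < p"
  shows "Dp p x y powr (p / (p + 1)) = SS p x y powr (1 / (p + 1))"
  unfolding Dp_def SS_def[symmetric] powr_powr using assms by simp

lemma chain_SS:
  assumes "0 < p" "p \<le> 1" "\<forall>i\<le>n. c i \<in> lp p"
  shows "SS p (c 0) (c n) \<le> (\<Sum>i<n. SS p (c i) (c (Suc i)))"
  using assms(3)
proof (induction n)
  case 0 then show ?case using SS_zero[OF assms(1,2), of "c 0" "c 0"] by simp
next
  case (Suc n)
  have "SS p (c 0) (c (Suc n)) \<le> SS p (c 0) (c n) + SS p (c n) (c (Suc n))"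
    using SS_tri[OF assms(1,2)] Suc.prems by simp
  also have "\<dots> \<le> (\<Sum>i<n. SS p (c i) (c (Suc i))) + SS p (c n) (c (Suc n))"
    using Suc by simp
  finally show ?case by simp
qed

lemma chain_eq:
  assumes "0 < p" "p \<le> 1" "x \<in> lp p" "y \<in> lp p"
  shows "chain_d p x y = SS p x y powr (1 / (p + 1))"
  unfolding chain_d_def
proof (rule cInf_eq_minimum)
  let ?c = "\<lambda>i::nat. if i = 0 then x else y"
  have "(\<Sum>i<1. (Dp p (?c i) (?c (Suc i))) powr (p / (p + 1))) = SS p x y powr (1 / (p + 1))"
    using Dq[OF assms(1)] by simp
  moreover have "1 \<ge> (1::nat) \<and> ?c 0 = x \<and> ?c 1 = y \<and> (\<forall>i\<le>1. ?c i \<in> lp p)" using assms by simp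
  ultimately show "SS p x y powr (1 / (p + 1)) \<in> {(\<Sum>i<n. (Dp p (c i) (c (Suc i))) powr (p / (p + 1))) | n c.
      n \<ge> 1 \<and> c 0 = x \<and> c n = y \<and> (\<forall>i\<le>n. c i \<in> lp p)}"
    apply (intro CollectI exI[of _ 1] exI[of _ ?c])
    by (metis (no_types, lifting))
next
  fix v assume "v \<in> {(\<Sum>i<n. (Dp p (c i) (c (Suc i))) powr (p / (p + 1))) | n c.
      n \<ge> 1 \<and> c 0 = x \<and> c n = y \<and> (\<forall>i\<le>n. c i \<in> lp p)}"
  then obtain n c where v: "v = (\<Sum>i<n. (Dp p (c i) (c (Suc i))) powr (p / (p + 1)))"
    and c: "c 0 = x" "c n = y" "\<forall>i\<le>n. c i \<in> lp p" by blast
  have r: "0 < 1 / (p + 1)" "1 / (p + 1) \<le> 1" using assms by auto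
  have "SS p x y powr (1 / (p + 1)) \<le> (\<Sum>i<n. SS p (c i) (c (Suc i))) powr (1 / (p + 1))"
    using chain_SS[OF assms(1,2) c(3)] c r by (intro powr_mono2) (auto intro!: SS_nonneg sum_nonneg simp: assms c)
  also have "\<dots> \<le> (\<Sum>i<n. SS p (c i) (c (Suc i)) powr (1 / (p + 1)))"
    using r by (intro powr_sum_subadd) (auto intro!: SS_nonneg simp: assms c)
  also have "\<dots> = v" unfolding v using Dq[OF assms(1)] by simp
  finally show "SS p x y powr (1 / (p + 1)) \<le> v" .
qed

theorem mainTheorem12:
  fixes p :: real
  assumes "0 < p" and "p \<le> 1"
  shows "(\<forall>x\<in>lp p. \<forall>y\<in>lp p.
            chain_d p x y = (\<Sum>n. \<bar>x n - y n\<bar> powr p) powr (1 / (p + 1)))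
         \<and> metric_on (lp p) (chain_d p)"
proof -
  have r: "0 < 1 / (p + 1)" "1 / (p + 1) \<le> 1" using assms by auto
  have eq: "\<And>x y. x \<in> lp p \<Longrightarrow> y \<in> lp p \<Longrightarrow> chain_d p x y = SS p x y powr (1 / (p + 1))"
    using chain_eq[OF assms] by blast
  have tri: "SS p x z powr (1 / (p + 1)) \<le> SS p x y powr (1 / (p + 1)) + SS p y z powr (1 / (p + 1))"
    if "x \<in> lp p" "y \<in> lp p" "z \<in> lp p" for x y z
  proof -
    have "SS p x z powr (1 / (p + 1)) \<le> (SS p x y + SS p y z) powr (1 / (p + 1))"
      using SS_tri[OF assms that] r by (intro powr_mono2) (auto intro!: SS_nonneg sum_nonneg simp: assms that)
    also have "\<dots> \<le> SS p x y powr (1 / (p + 1)) + SS p y z powr (1 / (p + 1))"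
      using r by (intro powr_subadd) (auto intro!: SS_nonneg simp: assms that)
    finally show ?thesis .
  qed
  show ?thesis
    unfolding metric_on_def
    using eq SS_zero[OF assms] tri SS_sym
    by (auto simp: SS_def[symmetric] powr_eq_0_iff)
qed

end
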